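(* For all $n\ge1$, $k\ge1$ and every $\pi\in\mathbf{C}(n,k)$, the list $\mathcal{C}(\pi)$ has flip sequence $\sigma^k_n$; that is, if $\mathcal{C}(\pi)=L_1,L_2,\dots,L_N$ and $\sigma^k_n=f_1,f_2,\dots,f_{N'}$, then $N'=N-1$ and $L_{t+1}=\mathrm{flip}_{f_t}(L_t)$ for all $1\le t\le N-1$.
   Context: Fix integers $n\ge1$, $k\ge1$. A $k$-coloured permutation of $\{1,\dots,n\}$ is a sequence $\pi=p_1p_2\cdots p_n$ with $p_i=v_i^{c_i}$, where $v_1\cdots v_n$ is a permutation of $\{1,\dots,n\}$ and each $c_i\in\{0,\dots,k-1\}$; the set of these is $\mathbf{C}(n,k)$. A pre-perm is a prefix $p_1\cdots p_j$ ($1\le j\le n$) of some element of $\mathbf{C}(n,k)$. For $p=v^c$ and integer $s$, $p^{+s}=v^{(c+s)\bmod k}$; for $\mathbf{p}=p_1\cdots p_j$, $\mathbf{p}^{+s}=p_1^{+s}\cdots p_j^{+s}$. For $1\le i\le n$ and $\pi=p_1\cdots p_n$, the flip $\mathrm{flip}_i(\pi)=p_i^{+1}p_{i-1}^{+1}\cdots p_1^{+1}p_{i+1}\cdots p_n$ (reverse the first $i$ entries and increment their colours mod $k$). For a pre-perm $\mathbf{p}$ of length $j$, $\rho(\mathbf{p})=r_1\cdots r_m$ ($m=kj$) is the concatenation $\mathbf{p}^{+(k-1)}\mathbf{p}^{+(k-2)}\cdots\mathbf{p}^{+0}$ viewed circularly (indices mod $m$), and $\rho(\mathbf{p})_i=r_{i-j+1}\cdots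 r_{i-1}$ (length $j-1$, indices mod $m$). The list $\mathcal{C}(\mathbf{p})$: if $j=1$, $\mathcal{C}(p_1)=p_1^{+0},p_1^{+1},\dots,p_1^{+(k-1)}$; if $j\ge2$, $\mathcal{C}(\mathbf{p})$ is the concatenation for $i=m,m-1,\dots,1$ of the lists obtained from $\mathcal{C}(\rho(\mathbf{p})_i)$ by appending $r_i$ to every entry. The sequence $\sigma^k_n$ is defined recursively by $\sigma^k_1=1^{k-1}$ (the value $1$ repeated $k-1$ times; empty if $k=1$) and, for $n>1$, $\sigma^k_n=(\sigma^k_{n-1},n)^{kn-1},\sigma^k_{n-1}$, i.e. $kn-1$ copies of the block "$\sigma^k_{n-1}$ followed by $n$", followed by one more copy of $\sigma^k_{n-1}$. *)

theory Defs
  imports Main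
begin

text \<open>A coloured entry v^c is the pair (v, c); colours are naturals in {0..<k}.\<close>
type_synonym centry = "nat \<times> nat"

definition colperms :: "nat \<Rightarrow> nat \<Rightarrow> centry list set" where
  "colperms n k = {\<pi>. length \<pi> = n \<and> distinct (map fst \<pi>) \<and> set (map fst \<pi>) = {1..n}
                        \<and> (\<forall>p\<in>set \<pi>. snd p < k)}"

definition incr :: "nat \<Rightarrow> nat \<Rightarrow> centry \<Rightarrow> centry" where
  "incr k s p = (fst p, (snd p + s) mod k)"

definition flip :: "nat \<Rightarrow> nat \<Rightarrow> centry list \<Rightarrow> centry list" where
  "flip k i \<pi> = map (incr k 1) (rev (take i \<pi>)) @ drop i \<pi>"

text \<open>rho(p) = p^{+(k-1)} p^{+(k-2)} ... p^{+0} as a list r_1 ... r_m (stored 0-based)\<close>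
definition rho :: "nat \<Rightarrow> centry list \<Rightarrow> centry list" where
  "rho k p = concat (map (\<lambda>s. map (incr k (k - 1 - s)) p) [0..<k])"

text \<open>r_x for an integer index x, taken circularly modulo m (1-based)\<close>
definition rr :: "nat \<Rightarrow> centry list \<Rightarrow> int \<Rightarrow> centry" where
  "rr k p x = rho k p ! nat ((x - 1) mod int (length (rho k p)))"

definition rhoi :: "nat \<Rightarrow> centry list \<Rightarrow> nat \<Rightarrow> centry list" where
  "rhoi k p i = map (\<lambda>t. rr k p (int i - int (length p) + 1 + int t)) [0..<length p - 1]"

text \<open>The list C(p), defined by recursion on the length (depth parameter d = length p).\<close>
fun Caux :: "nat \<Rightarrow> nat \<Rightarrow> centry list \<Rightarrow> centry list list" where
  "Caux k 0 p = []"
| "Caux k (Suc d) p =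
     (if length p = 1 then map (\<lambda>s. [incr k s (hd p)]) [0..<k]
      else concat (map (\<lambda>i. map (\<lambda>L. L @ [rr k p (int i)]) (Caux k d (rhoi k p i)))
                       (rev [1..<length (rho k p) + 1])))"

definition Clist :: "nat \<Rightarrow> centry list \<Rightarrow> centry list list" where
  "Clist k p = Caux k (length p) p"

fun sigma :: "nat \<Rightarrow> nat \<Rightarrow> nat list" where
  "sigma k 0 = []"
| "sigma k (Suc 0) = replicate (k - 1) 1"
| "sigma k (Suc (Suc n)) =
     concat (replicate (k * Suc (Suc n) - 1) (sigma k (Suc n) @ [Suc (Suc n)])) @ sigma k (Suc n)"

end

theory Submission imports Defs begin

fun fchain :: "nat \<Rightarrow> centry list list \<Rightarrow> nat list \<Rightarrow> bool" where
  "fchain k [] fs = False"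
| "fchain k [x] fs = (fs = [])"
| "fchain k (x#y#ys) fs = (case fs of [] \<Rightarrow> False | f#fs' \<Rightarrow> y = flip k f x \<and> fchain k (y#ys) fs')"

lemma fchain_nth: "fchain k L fs \<Longrightarrow> length fs = length L - 1 \<and> (\<forall>t. t+1 < length L \<longrightarrow> L!(t+1) = flip k (fs!t) (L!t))"
proof (induction k L fs rule: fchain.induct)
  case (3 k x y ys fs)
  then obtain f fs' where fs: "fs = f#fs'" "y = flip k f x" "fchain k (y#ys) fs'" by (auto split: list.splits)
  with 3 have IH: "length fs' = length (y#ys) - 1 \<and> (\<forall>t. t+1 < length (y#ys) \<longrightarrow> (y#ys)!(t+1) = flip k (fs'!t) ((y#ys)!t))" by auto
  show ?case
  proof (intro conjI allI impI)
    show "length fs = length (x # y # ys) - 1" using IH fs by simp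
    fix t assume "t + 1 < length (x # y # ys)"
    then show "(x # y # ys) ! (t + 1) = flip k (fs ! t) ((x # y # ys) ! t)"
      using IH fs by (cases t) auto
  qed
qed auto

lemma fchain_ne: "fchain k A f \<Longrightarrow> A \<noteq> []" by (cases A) auto

lemma fchain_append: "fchain k A f \<Longrightarrow> fchain k B g \<Longrightarrow> hd B = flip k j (last A) \<Longrightarrow> fchain k (A@B) (f@j#g)"
proof (induction k A f rule: fchain.induct)
  case (2 k x fs)
  then obtain b bs where "B = b#bs" by (cases B) auto
  with 2 show ?case by simp
next
  case (3 k x y ys fs)
  then show ?case by (auto split: list.splits)
qed auto

lemma flip_append: "i \<le> length L \<Longrightarrow> flip k i (L@[x]) = flip k i L @ [x]"
  by (simp add: flip_def)

lemma fchain_map: "fchain k A f \<Longrightarrow> \<forall>L\<in>set A. length L = d \<Longrightarrow> \<forall>i\<in>set f. i \<le> d \<Longrightarrow> fchain k (map (\<lambda>L. L@[x]) A) f"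
proof (induction k A f rule: fchain.induct)
  case (3 k x' y ys fs)
  then show ?case by (auto split: list.splits simp: flip_append)
qed auto

lemma fchain_concat:
  "xs \<noteq> [] \<Longrightarrow> (\<forall>x\<in>set xs. fchain k (g x) s) \<Longrightarrow>
   (\<forall>i. Suc i < length xs \<longrightarrow> hd (g (xs ! Suc i)) = flip k j (last (g (xs ! i)))) \<Longrightarrow>
   fchain k (concat (map g xs)) (concat (replicate (length xs - 1) (s@[j])) @ s)"
proof (induction xs)
  case (Cons a xs)
  show ?case
  proof (cases "xs = []")
    case True then show ?thesis using Cons by simp
  next
    case False
    have IH: "fchain k (concat (map g xs)) (concat (replicate (length xs - 1) (s@[j])) @ s)"
    proof (rule Cons.IH[OF False])
      show "\<forall>x\<in>set xs. fchain k (g x) s" using Cons.prems by simp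
      show "\<forall>i. Suc i < length xs \<longrightarrow> hd (g (xs ! Suc i)) = flip k j (last (g (xs ! i)))"
      proof (intro allI impI)
        fix i assume "Suc i < length xs"
        then show "hd (g (xs ! Suc i)) = flip k j (last (g (xs ! i)))"
          using Cons.prems(3)[rule_format, of "Suc i"] by simp
      qed
    qed
    obtain b bs where xs: "xs = b#bs" using False by (cases xs) auto
    have "g b \<noteq> []" using Cons.prems xs fchain_ne by auto
    then have hd: "hd (concat (map g xs)) = hd (g b)" using xs by simp
    have "hd (g b) = flip k j (last (g a))" using Cons.prems(3)[rule_format, of 0] xs by simp
    then have "fchain k (g a @ concat (map g xs)) (s @ j # (concat (replicate (length xs - 1) (s@[j])) @ s))"
      using fchain_append[OF _ IH] Cons.prems hd by auto
    moreover have "concat (replicate (length (a#xs) - 1) (s@[j])) @ s = s @ j # (concat (replicate (length xs - 1) (s@[j])) @ s)"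
      using xs by simp
    ultimately show ?thesis by simp
  qed
qed simp



lemma nth_concat_uniform:
  "(\<forall>s<K. length (f s) = j) \<Longrightarrow> y < K*j \<Longrightarrow> concat (map f [0..<K]) ! y = f (y div j) ! (y mod j)"
proof (induction K arbitrary: y)
  case (Suc K)
  have len: "length (concat (map f [0..<K])) = K*j"
    using Suc.prems(1) by (induction K) auto
  show ?case
  proof (cases "y < K*j")
    case True
    then show ?thesis using Suc len by (simp add: nth_append)
  next
    case False
    then have "y div j = K" "y mod j = y - K*j" using Suc.prems(2)
      by (auto simp: div_nat_eqI mod_nat_eqI mult.commute)
    then show ?thesis using False len by (simp add: nth_append)
  qed
qed simp

lemma length_rho: "length (rho k p) = k * length p"
  unfolding rho_def by (simp add: length_concat o_def sum_list_triv)

lemma rho_nth: "y < k * length p \<Longrightarrow> rho k p ! y = incr k (k - 1 - y div length p) (p ! (y mod length p))"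
proof -
  assume a: "y < k * length p"
  then have "length p > 0" by (cases "length p") auto
  then show ?thesis unfolding rho_def
    by (subst nth_concat_uniform[where j="length p"]) (use a in auto)
qed

lemma incr_incr: "incr k a (incr k b q) = incr k (a+b) q"
  by (simp add: incr_def mod_add_right_eq add.commute add.left_commute)

lemma incr_0: "snd q < k \<Longrightarrow> incr k 0 q = q"
  by (simp add: incr_def)

lemma incr_snd: "k \<ge> 1 \<Longrightarrow> snd (incr k s q) < k"
  by (simp add: incr_def)

lemma incr_fst[simp]: "fst (incr k s q) = fst q"
  by (simp add: incr_def)

lemma incr_k: "incr k k q = incr k 0 q"
  by (simp add: incr_def)

lemma rr_eq:
  assumes "k \<ge> 1" "p \<noteq> []"
  shows "rr k p x = incr k (k - 1 - nat ((x-1) mod int (k*length p)) div length p)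
                       (p ! (nat ((x-1) mod int (k*length p)) mod length p))"
proof -
  have m: "0 < int (k * length p)" using assms by simp
  have "nat ((x-1) mod int (k*length p)) < k * length p"
    using m by (simp add: nat_less_iff)
  then show ?thesis unfolding rr_def length_rho by (simp add: rho_nth)
qed

lemma rr_shift:
  assumes "k \<ge> 1" "p \<noteq> []"
  shows "rr k p (x - int (length p)) = incr k 1 (rr k p x)"
proof -
  define j where "j = length p"
  define m where "m = k * j"
  have j: "j \<ge> 1" using assms j_def by (cases p) auto
  have mpos: "0 < int m" using assms j m_def by simp
  define Y where "Y = (x-1) mod int m"
  have Y: "0 \<le> Y" "Y < int m" using mpos Y_def by auto
  define y where "y = nat Y"
  have ylt: "y < m" using Y y_def by auto
  have "y < k * j" using ylt m_def by simp
  then have "y div j < k" by (rule less_mult_imp_div_less)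
  then have ydiv: "y div j \<le> k - 1" by simp
  have xe: "x - int j - 1 = (x - 1) - int j" by simp
  have "(Y - int j) mod int m = ((x - 1) - int j) mod int m"
    unfolding Y_def by (rule mod_diff_left_eq)
  then have "(x - int j - 1) mod int m = (Y - int j) mod int m"
    unfolding xe by simp
  show ?thesis
  proof (cases "Y \<ge> int j")
    case True
    then have "(x - int j - 1) mod int m = Y - int j"
      using \<open>(x - int j - 1) mod int m = (Y - int j) mod int m\<close> Y by simp
    then have y': "nat ((x - int j - 1) mod int m) = y - j" using True y_def by simp
    have yj: "y \<ge> j" using True y_def by simp
    have yy: "y = (y - j) + j" using yj by simp
    obtain z where z: "y = z + j" using yj by (metis le_add_diff_inverse2)
    have j0: "j \<noteq> 0" using j by simp
    have e1: "y div j = (y - j) div j + 1" using j0 z by (simp add: div_add_self2)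
    have e2: "y mod j = (y - j) mod j" using j0 z by simp
    have d: "(y - j) div j = y div j - 1" using e1 by simp
    have md: "(y - j) mod j = y mod j" using e2 by simp
    have dpos: "y div j \<ge> 1" using e1 by simp
    have "k - 1 - (y div j - 1) = 1 + (k - 1 - y div j)" "k - y div j = Suc (k - Suc (y div j))" using ydiv dpos assms(1) by simp_all
    then show ?thesis using y' d md
      unfolding rr_eq[OF assms] j_def[symmetric] m_def[symmetric] Y_def[symmetric] y_def[symmetric]
      by (simp add: incr_incr)
  next
    case False
    have jm: "j \<le> m" using assms(1) m_def by simp
    have "(Y - int j) mod int m = (Y - int j + int m) mod int m" by simp
    also have "\<dots> = Y - int j + int m"
      using Y False jm by (intro mod_pos_pos_trivial) auto
    finally have "(x - int j - 1) mod int m = Y - int j + int m"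
      using \<open>(x - int j - 1) mod int m = (Y - int j) mod int m\<close> by simp
    moreover obtain k' where k': "k = Suc k'" using assms(1) by (cases k) auto
    moreover have "int m = int j + int ((k-1)*j)" using k' m_def by simp
    ultimately have "(x - int j - 1) mod int m = Y + int ((k-1)*j)" by simp
    then have y': "nat ((x - int j - 1) mod int m) = y + (k-1)*j" using Y y_def
      by (simp add: nat_add_distrib del: of_nat_mult)
    have yj: "y < j" using False y_def Y by simp
    have d: "(y + (k-1)*j) div j = k - 1" using yj j by simp
    have md: "(y + (k-1)*j) mod j = y mod j" by simp
    have "y div j = 0" using yj by simp
    then have e: "1 + (k - 1 - y div j) = k" using assms(1) by simp
    have e2: "k - 1 - (k - 1) = 0" by simp
    show ?thesis
      unfolding rr_eq[OF assms] j_def[symmetric] m_def[symmetric] Y_def[symmetric] y_def[symmetric] y' d md incr_incr e e2 incr_k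
      by (rule refl)
  qed
qed


lemma divmod_helper: fixes t L k :: nat shows "t < L \<Longrightarrow> (t + k*L) div L = k \<and> (t + k*L) mod L = t"
proof -
  assume a: "t < L"
  then have "L \<noteq> 0" by simp
  then show ?thesis using a by simp
qed

lemma rr_snd: "k \<ge> 1 \<Longrightarrow> p \<noteq> [] \<Longrightarrow> snd (rr k p x) < k"
  by (simp add: rr_eq incr_snd)

lemma length_rhoi: "length (rhoi k p i) = length p - 1"
  by (simp add: rhoi_def)

lemma rhoi_nth: "t < length p - 1 \<Longrightarrow> rhoi k p i ! t = rr k p (int i - int (length p) + 1 + int t)"
  by (simp add: rhoi_def)

lemma rr_nat: assumes "k \<ge> 1" "p \<noteq> []" "y < k * length p"
  shows "rr k p (int y + 1) = incr k (k - 1 - y div length p) (p ! (y mod length p))"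
proof -
  have m: "(int y + 1 - 1) mod int (k * length p) = int y"
    using assms(3) by (metis add_diff_cancel_right' mod_less zmod_int)
  show ?thesis unfolding rr_eq[OF assms(1,2)] m nat_int by (rule refl)
qed

lemma rr_period: "rr k p (x - int (k * length p)) = rr k p x"
proof -
  have "x - int (k * length p) - 1 = (x - 1) - int (k * length p)" by simp
  then show ?thesis unfolding rr_def length_rho by (simp only: minus_mod_self2)
qed
  
lemma rhoi_m:
  assumes "k \<ge> 1" "p \<noteq> []" "\<forall>q\<in>set p. snd q < k"
  shows "rhoi k p (k * length p) = butlast p"
proof (rule nth_equalityI)
  show "length (rhoi k p (k * length p)) = length (butlast p)" by (simp add: length_rhoi)
  fix t assume "t < length (rhoi k p (k * length p))"
  then have t: "t < length p - 1" by (simp add: length_rhoi)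
  obtain k' where k': "k = Suc k'" using assms(1) by (cases k) auto
  define y where "y = t + k' * length p"
  have L0: "length p \<noteq> 0" using t by (cases p) auto
  have yl: "y < k * length p" using t k' y_def by simp
  have eq: "int (k * length p) - int (length p) + 1 + int t = int y + 1" using k' y_def by simp
  have "y div length p = k' \<and> y mod length p = t" unfolding y_def by (rule divmod_helper) (use t in simp)
  then have r: "rr k p (int y + 1) = p ! t" using rr_nat[OF assms(1,2) yl] k' assms(3) t
    by (simp add: incr_0)
  have "rhoi k p (k*length p) ! t = rr k p (int (k * length p) - int (length p) + 1 + int t)" by (rule rhoi_nth[OF t])
  also have "\<dots> = rr k p (int y + 1)" unfolding eq ..
  also have "\<dots> = p ! t" by (rule r)
  also have "\<dots> = butlast p ! t" using t by (simp add: nth_butlast)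
  finally show "rhoi k p (k * length p) ! t = butlast p ! t" .
qed

lemma rr_m:
  assumes "k \<ge> 1" "p \<noteq> []" "\<forall>q\<in>set p. snd q < k"
  shows "rr k p (int (k * length p)) = last p"
proof -
  obtain k' where k': "k = Suc k'" using assms(1) by (cases k) auto
  define y where "y = (length p - 1) + k' * length p"
  have lp: "length p \<ge> 1" using assms(2) by (cases p) auto
  have yl: "y < k * length p" using lp k' y_def by simp
  have eq: "int (k * length p) = int y + 1" using k' y_def lp by simp
  have L0: "length p \<noteq> 0" using lp by (cases p) auto
  have "y div length p = k' \<and> y mod length p = length p - 1" unfolding y_def by (rule divmod_helper) (use lp in simp)
  then show ?thesis using rr_nat[OF assms(1,2) yl] k' assms(3) lp eq
    by (simp add: incr_0 last_conv_nth assms(2))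
qed

lemma rhoi_1:
  assumes "k \<ge> 1" "p \<noteq> []" "\<forall>q\<in>set p. snd q < k"
  shows "rhoi k p 1 = tl p"
proof (rule nth_equalityI)
  show "length (rhoi k p 1) = length (tl p)" by (simp add: length_rhoi)
  fix t assume "t < length (rhoi k p 1)"
  then have t: "t < length p - 1" by (simp add: length_rhoi)
  obtain k' where k': "k = Suc k'" using assms(1) by (cases k) auto
  define y where "y = (t + 1) + k' * length p"
  have L0: "length p \<noteq> 0" using t by (cases p) auto
  have yl: "y < k * length p" using t k' y_def by simp
  have eq: "int 1 - int (length p) + 1 + int t = int y + 1 - int (k * length p)" using k' y_def by simp
  have "y div length p = k' \<and> y mod length p = t + 1" unfolding y_def by (rule divmod_helper) (use t in simp)
  then have r: "rr k p (int y + 1) = p ! (t+1)" using rr_nat[OF assms(1,2) yl] k' assms(3) t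
    by (simp add: incr_0)
  have "rhoi k p 1 ! t = rr k p (int 1 - int (length p) + 1 + int t)" by (rule rhoi_nth[OF t])
  also have "\<dots> = rr k p (int y + 1 - int (k * length p))" unfolding eq ..
  also have "\<dots> = rr k p (int y + 1)" by (rule rr_period)
  also have "\<dots> = tl p ! t" using r t by (simp add: nth_tl)
  finally show "rhoi k p 1 ! t = tl p ! t" .
qed

lemma rr_1:
  assumes "k \<ge> 1" "p \<noteq> []"
  shows "rr k p 1 = incr k (k - 1) (hd p)"
proof -
  have yl: "0 < k * length p" using assms by simp
  show ?thesis using rr_nat[OF assms yl] assms by (simp add: hd_conv_nth)
qed

lemma rhoi_trans:
  assumes "k \<ge> 1" "p \<noteq> []"
  shows "rhoi k p i @ [rr k p (int i)] = incr k 1 (rr k p (int (Suc i))) # rhoi k p (Suc i)"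
proof (rule nth_equalityI)
  have lp: "length p \<ge> 1" using assms(2) by (cases p) auto
  then show "length (rhoi k p i @ [rr k p (int i)]) = length (incr k 1 (rr k p (int (Suc i))) # rhoi k p (Suc i))"
    by (simp add: length_rhoi)
  fix t assume "t < length (rhoi k p i @ [rr k p (int i)])"
  then have t: "t < length p" using lp by (simp add: length_rhoi)
  have L: "(rhoi k p i @ [rr k p (int i)]) ! t = rr k p (int i - int (length p) + 1 + int t)"
  proof (cases "t < length p - 1")
    case True then show ?thesis by (simp add: nth_append length_rhoi rhoi_nth)
  next
    case False then have "t = length p - 1" using t by simp
    then show ?thesis using lp by (simp add: nth_append length_rhoi of_nat_diff)
  qed
  have R: "(incr k 1 (rr k p (int (Suc i))) # rhoi k p (Suc i)) ! t = rr k p (int i - int (length p) + 1 + int t)"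
  proof (cases t)
    case 0
    have e: "int (Suc i) - int (length p) = int i - int (length p) + 1" by simp
    have "rr k p (int i - int (length p) + 1) = incr k 1 (rr k p (int (Suc i)))"
      using rr_shift[OF assms, of "int (Suc i)"] unfolding e .
    then show ?thesis using 0 by simp
  next
    case (Suc t')
    have e: "int (Suc i) - int (length p) + 1 + int t' = int i - int (length p) + 1 + int t" using Suc by simp
    have "t' < length p - 1" using t Suc by simp
    then have "rhoi k p (Suc i) ! t' = rr k p (int (Suc i) - int (length p) + 1 + int t')" by (rule rhoi_nth)
    then have h: "rhoi k p (Suc i) ! t' = rr k p (int i - int (length p) + 1 + int t)" unfolding e .
    show ?thesis using h unfolding Suc nth_Cons_Suc .
  qed
  show "(rhoi k p i @ [rr k p (int i)]) ! t = (incr k 1 (rr k p (int (Suc i))) # rhoi k p (Suc i)) ! t"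
    using L R by simp
qed


lemma sigma_le: "\<forall>i\<in>set (sigma k n). i \<le> n"
  by (induction k n rule: sigma.induct) auto

lemma C1_chain: "1 \<le> K \<Longrightarrow> fchain k (map (\<lambda>s. [incr k s a]) [0..<K]) (replicate (K-1) 1)"
proof (induction K)
  case (Suc K)
  show ?case
  proof (cases "K = 0")
    case True then show ?thesis by simp
  next
    case False
    have IH: "fchain k (map (\<lambda>s. [incr k s a]) [0..<K]) (replicate (K-1) 1)" using Suc False by simp
    have "last (map (\<lambda>s. [incr k s a]) [0..<K]) = [incr k (K-1) a]" using False by (simp add: last_map)
    then have h: "hd [[incr k K a]] = flip k 1 (last (map (\<lambda>s. [incr k s a]) [0..<K]))"
      using False by (simp add: flip_def incr_incr)
    have "fchain k (map (\<lambda>s. [incr k s a]) [0..<K] @ [[incr k K a]]) (replicate (K-1) 1 @ 1 # [])"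
      by (rule fchain_append[OF IH _ h]) simp
    moreover have "replicate (K-1) 1 @ [1::nat] = replicate (Suc K - 1) 1"
    proof -
      obtain K' where "K = Suc K'" using False by (cases K) auto
      then show ?thesis by (simp add: replicate_append_same)
    qed
    ultimately show ?thesis by simp
  qed
qed simp

lemma last_concat_map: "xs \<noteq> [] \<Longrightarrow> g (last xs) \<noteq> [] \<Longrightarrow> last (concat (map g xs)) = last (g (last xs))"
proof (induction xs)
  case (Cons a xs)
  show ?case
  proof (cases "xs = []")
    case True then show ?thesis using Cons by simp
  next
    case False
    then have "last (concat (map g xs)) = last (g (last xs))" "g (last xs) \<noteq> []" using Cons by auto
    moreover have "concat (map g xs) \<noteq> []" using False \<open>g (last xs) \<noteq> []\<close>
      by (metis (no_types, lifting) Nil_is_append_conv append_butlast_last_id concat_append list.simps(9) map_append concat.simps(2))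
    ultimately show ?thesis using False by simp
  qed
qed simp

lemma incr_back: "k \<ge> 1 \<Longrightarrow> snd q < k \<Longrightarrow> incr k 1 (incr k (k-1) q) = q"
  by (simp add: incr_incr incr_k incr_0)

lemma Caux_step: "length p \<noteq> 1 \<Longrightarrow> Caux k (Suc d) p =
  concat (map (\<lambda>i. map (\<lambda>L. L @ [rr k p (int i)]) (Caux k d (rhoi k p i))) (rev [1..<length (rho k p) + 1]))"
  by (simp only: Caux.simps(2) if_False simp_thms)

declare Caux.simps(2)[simp del]

lemma main:
  "k \<ge> 1 \<Longrightarrow> length p = Suc d \<Longrightarrow> \<forall>q\<in>set p. snd q < k \<Longrightarrow>
   fchain k (Caux k (Suc d) p) (sigma k (Suc d)) \<and> hd (Caux k (Suc d) p) = p
   \<and> last (Caux k (Suc d) p) = map (incr k (k-1)) (rev p)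
   \<and> (\<forall>L\<in>set (Caux k (Suc d) p). length L = Suc d)"
proof (induction d arbitrary: p)
  case 0
  then obtain a where p: "p = [a]" by (cases p) auto
  have C: "Caux k (Suc 0) p = map (\<lambda>s. [incr k s a]) [0..<k]" using p by (simp add: Caux.simps(2))
  have k0: "[0..<k] \<noteq> []" using 0 by simp
  have "hd [0..<k] = 0" using 0 by (simp add: hd_upt)
  moreover have "last [0..<k] = k - 1" using 0 by (simp add: last_upt)
  ultimately show ?case using C C1_chain[OF 0(1), of k a] 0 p k0
    by (simp add: hd_map last_map incr_0)
next
  case (Suc d)
  define j where "j = Suc (Suc d)"
  define m where "m = k * j"
  define xs where "xs = rev [1..<m+1]"
  define g where "g = (\<lambda>i. map (\<lambda>L. L @ [rr k p (int i)]) (Caux k (Suc d) (rhoi k p i)))"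
  have pne: "p \<noteq> []" using Suc.prems by auto
  have lp: "length p = j" using Suc.prems j_def by simp
  have m2: "m \<ge> 2" using Suc.prems(1) m_def j_def by (cases k) auto
  have C: "Caux k (Suc (Suc d)) p = concat (map g xs)"
    using Caux_step[of p k "Suc d"] Suc.prems(2) length_rho[of k p] unfolding g_def xs_def m_def j_def by simp
  have sig: "sigma k (Suc (Suc d)) = concat (replicate (length xs - 1) (sigma k (Suc d) @ [j])) @ sigma k (Suc d)"
    unfolding xs_def m_def j_def by simp
  have IH: "fchain k (Caux k (Suc d) (rhoi k p i)) (sigma k (Suc d)) \<and> hd (Caux k (Suc d) (rhoi k p i)) = rhoi k p i
   \<and> last (Caux k (Suc d) (rhoi k p i)) = map (incr k (k-1)) (rev (rhoi k p i))
   \<and> (\<forall>L\<in>set (Caux k (Suc d) (rhoi k p i)). length L = Suc d)" for i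
  proof (rule Suc.IH[OF Suc.prems(1)])
    show "length (rhoi k p i) = Suc d" using Suc.prems(2) by (simp add: length_rhoi)
    show "\<forall>q\<in>set (rhoi k p i). snd q < k" using rr_snd[OF Suc.prems(1) pne] by (auto simp: rhoi_def)
  qed
  have gne: "g i \<noteq> []" for i using fchain_ne[OF conjunct1[OF IH[of i]]] unfolding g_def by simp
  have ghd: "hd (g i) = rhoi k p i @ [rr k p (int i)]" for i
  proof -
    have ne: "Caux k (Suc d) (rhoi k p i) \<noteq> []" by (rule fchain_ne[OF conjunct1[OF IH[of i]]])
    then show ?thesis using IH[of i] unfolding g_def by (simp add: hd_map)
  qed
  have glast: "last (g i) = map (incr k (k-1)) (rev (rhoi k p i)) @ [rr k p (int i)]" for i
  proof -
    have ne: "Caux k (Suc d) (rhoi k p i) \<noteq> []" by (rule fchain_ne[OF conjunct1[OF IH[of i]]])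
    then show ?thesis using IH[of i] unfolding g_def by (simp add: last_map)
  qed
  have gchain: "fchain k (g i) (sigma k (Suc d))" for i
  proof -
    have a: "fchain k (Caux k (Suc d) (rhoi k p i)) (sigma k (Suc d))" by (rule conjunct1[OF IH[of i]])
    have b: "\<forall>L\<in>set (Caux k (Suc d) (rhoi k p i)). length L = Suc d" using IH[of i] by simp
    show ?thesis unfolding g_def by (rule fchain_map[OF a b sigma_le])
  qed
  have xsne: "xs \<noteq> []" using m2 xs_def by simp
  have xsnth: "xs ! i = m - i" if i: "i < m" for i
  proof -
    have "rev [1..<m+1] ! i = [1..<m+1] ! (length [1..<m+1] - Suc i)" by (rule rev_nth) (use i in simp)
    also have "\<dots> = m - i" using i by (simp del: upt_Suc)
    finally show ?thesis unfolding xs_def .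
  qed
  have lxs: "length xs = m" unfolding xs_def by simp
  have trans: "hd (g (xs ! Suc i)) = flip k j (last (g (xs ! i)))" if i: "Suc i < length xs" for i
  proof -
    define b where "b = m - Suc i"
    have xi: "xs ! i = Suc b" "xs ! Suc i = b" using i lxs xsnth b_def by auto
    define R where "R = rhoi k p (Suc b)"
    have lR: "length R = Suc d" using R_def lp j_def by (simp add: length_rhoi)
    have Rk: "\<forall>q\<in>set R. snd q < k" using rr_snd[OF Suc.prems(1) pne] by (auto simp: rhoi_def R_def)
    have "flip k j (map (incr k (k-1)) (rev R) @ [rr k p (int (Suc b))])
          = incr k 1 (rr k p (int (Suc b))) # map (incr k 1 \<circ> incr k (k-1)) R"
      using lR j_def by (simp add: flip_def rev_map)
    also have "map (incr k 1 \<circ> incr k (k-1)) R = R"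
      using Rk incr_back[OF Suc.prems(1)] by (simp add: map_idI)
    finally have "flip k j (last (g (Suc b))) = incr k 1 (rr k p (int (Suc b))) # R"
      using glast R_def by simp
    then show ?thesis using xi ghd rhoi_trans[OF Suc.prems(1) pne, of b] R_def by simp
  qed
  have chain: "fchain k (concat (map g xs)) (concat (replicate (length xs - 1) (sigma k (Suc d) @ [j])) @ sigma k (Suc d))"
  proof (rule fchain_concat[OF xsne])
    show "\<forall>x\<in>set xs. fchain k (g x) (sigma k (Suc d))" using gchain by blast
    show "\<forall>i. Suc i < length xs \<longrightarrow> hd (g (xs ! Suc i)) = flip k j (last (g (xs ! i)))" using trans by blast
  qed
  have hdxs: "hd xs = m" using xsne xsnth[of 0] m2 by (simp add: hd_conv_nth)
  have hd: "hd (concat (map g xs)) = p"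
  proof -
    obtain x ys where xs: "xs = x # ys" using xsne by (cases xs) auto
    then have "hd (concat (map g xs)) = hd (g m)" using hdxs gne by simp
    also have "\<dots> = p" using ghd[of m] rhoi_m[OF Suc.prems(1) pne Suc.prems(3)] rr_m[OF Suc.prems(1) pne Suc.prems(3)]
      lp m_def pne by simp
    finally show ?thesis .
  qed
  have lastxs: "last xs = 1" unfolding xs_def using m2 by (simp add: last_rev hd_upt)
  have last: "last (concat (map g xs)) = map (incr k (k-1)) (rev p)"
  proof -
    have "last (concat (map g xs)) = last (g (last xs))" by (rule last_concat_map[OF xsne gne])
    then have "last (concat (map g xs)) = last (g 1)" unfolding lastxs .
    also have "\<dots> = map (incr k (k-1)) (rev p)"
      using glast[of 1] rhoi_1[OF Suc.prems(1) pne Suc.prems(3)] rr_1[OF Suc.prems(1) pne] pne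
      by (cases p) auto
    finally show ?thesis .
  qed
  have lens: "\<forall>L\<in>set (concat (map g xs)). length L = Suc (Suc d)"
  proof
    fix L assume "L \<in> set (concat (map g xs))"
    then obtain i L' where "L = L' @ [rr k p (int i)]" "L' \<in> set (Caux k (Suc d) (rhoi k p i))"
      unfolding g_def by auto
    then show "length L = Suc (Suc d)" using IH[of i] by simp
  qed
  show ?case using C sig chain hd last lens j_def by simp
qed

theorem lemma2:
  fixes n k :: nat and \<pi> :: "centry list"
  assumes "n \<ge> 1" and "k \<ge> 1" and "\<pi> \<in> colperms n k"
  shows "length (sigma k n) = length (Clist k \<pi>) - 1
       \<and> (\<forall>t. t + 1 < length (Clist k \<pi>) \<longrightarrow>
              Clist k \<pi> ! (t + 1) = flip k (sigma k n ! t) (Clist k \<pi> ! t))"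
proof -
  obtain d where n: "n = Suc d" using assms(1) by (cases n) auto
  have l: "length \<pi> = Suc d" "\<forall>q\<in>set \<pi>. snd q < k" using assms(3) n by (auto simp: colperms_def)
  have "fchain k (Clist k \<pi>) (sigma k n)"
    using main[OF assms(2) l] l n by (simp add: Clist_def)
  then show ?thesis using fchain_nth by metis
qed

end
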